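(* Let $\kappa$ be an infinite cardinal and let $B(\kappa)=(\kappa^{\aleph_0},\mathcal U)$ be the countable power of the discrete uniform space of cardinality $\kappa$. Then $B(\kappa)$ is co-universal in the class of all non-archimedean uniform spaces whose uniformity is induced by a complete metric and whose topological weight is $\le\kappa$: that is, $B(\kappa)$ belongs to this class, and for every (nonempty) $Y$ in this class there exists a uniformly continuous surjection $f\colon B(\kappa)\to Y$ which is a quotient map of topological spaces.
   Context: A uniform space is non-archimedean if its uniformity has a base consisting of equivalence relations. All uniform spaces are Hausdorff. *)

theory Defs
  imports "HOL-Analysis.Analysis" "HOL-Library.Equipollence"
begin

definition uniformity_on :: "'a set \<Rightarrow> ('a \<times> 'a) set set \<Rightarrow> bool" where
  "uniformity_on X \<Phi> \<longleftrightarrow>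
     \<Phi> \<noteq> {} \<and>
     (\<forall>U\<in>\<Phi>. Id_on X \<subseteq> U \<and> U \<subseteq> X \<times> X) \<and>
     (\<forall>U V. U \<in> \<Phi> \<and> U \<subseteq> V \<and> V \<subseteq> X \<times> X \<longrightarrow> V \<in> \<Phi>) \<and>
     (\<forall>U\<in>\<Phi>. \<forall>V\<in>\<Phi>. U \<inter> V \<in> \<Phi>) \<and>
     (\<forall>U\<in>\<Phi>. converse U \<in> \<Phi>) \<and>
     (\<forall>U\<in>\<Phi>. \<exists>V\<in>\<Phi>. V O V \<subseteq> U)"

text \<open>All uniform spaces are assumed Hausdorff (separated).\<close>
definition uniform_space_on :: "'a set \<Rightarrow> ('a \<times> 'a) set set \<Rightarrow> bool" where
  "uniform_space_on X \<Phi> \<longleftrightarrow> uniformity_on X \<Phi> \<and> \<Inter>\<Phi> = Id_on X"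

definition non_archimedean :: "'a set \<Rightarrow> ('a \<times> 'a) set set \<Rightarrow> bool" where
  "non_archimedean X \<Phi> \<longleftrightarrow> (\<forall>U\<in>\<Phi>. \<exists>V\<in>\<Phi>. equiv X V \<and> V \<subseteq> U)"

definition utopology :: "'a set \<Rightarrow> ('a \<times> 'a) set set \<Rightarrow> 'a topology" where
  "utopology X \<Phi> = topology (\<lambda>S. S \<subseteq> X \<and> (\<forall>x\<in>S. \<exists>U\<in>\<Phi>. {y. (x, y) \<in> U} \<subseteq> S))"

definition metric_uniformity :: "'a set \<Rightarrow> ('a \<Rightarrow> 'a \<Rightarrow> real) \<Rightarrow> ('a \<times> 'a) set set" where
  "metric_uniformity M d =
     {U. U \<subseteq> M \<times> M \<and> (\<exists>\<epsilon>>0. {(x, y). x \<in> M \<and> y \<in> M \<and> d x y < \<epsilon>} \<subseteq> U)}"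

definition complete_metric_uniformity :: "'a set \<Rightarrow> ('a \<times> 'a) set set \<Rightarrow> bool" where
  "complete_metric_uniformity X \<Phi> \<longleftrightarrow>
     (\<exists>d. Metric_space X d \<and> Metric_space.mcomplete X d \<and> \<Phi> = metric_uniformity X d)"

definition open_base_of :: "'a topology \<Rightarrow> 'a set set \<Rightarrow> bool" where
  "open_base_of T \<B> \<longleftrightarrow> (\<forall>B\<in>\<B>. openin T B) \<and>
     (\<forall>S. openin T S \<longrightarrow> (\<exists>\<C>\<subseteq>\<B>. \<Union>\<C> = S))"

definition weight_le :: "'a topology \<Rightarrow> 'k set \<Rightarrow> bool" where
  "weight_le T K \<longleftrightarrow> (\<exists>\<B>. open_base_of T \<B> \<and> \<B> \<lesssim> K)"

definition NA_cm_class :: "'k set \<Rightarrow> 'a set \<Rightarrow> ('a \<times> 'a) set set \<Rightarrow> bool" where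
  "NA_cm_class K X \<Phi> \<longleftrightarrow> uniform_space_on X \<Phi> \<and> non_archimedean X \<Phi> \<and>
     complete_metric_uniformity X \<Phi> \<and> weight_le (utopology X \<Phi>) K"

definition uniformly_continuous_on_u ::
  "'a set \<Rightarrow> ('a \<times> 'a) set set \<Rightarrow> 'b set \<Rightarrow> ('b \<times> 'b) set set \<Rightarrow> ('a \<Rightarrow> 'b) \<Rightarrow> bool" where
  "uniformly_continuous_on_u X \<Phi> Y \<Psi> f \<longleftrightarrow> f ` X \<subseteq> Y \<and>
     (\<forall>V\<in>\<Psi>. \<exists>U\<in>\<Phi>. \<forall>(x, y)\<in>U. (f x, f y) \<in> V)"

definition discrete_uniformity :: "'k set \<Rightarrow> ('k \<times> 'k) set set" where
  "discrete_uniformity K = {U. Id_on K \<subseteq> U \<and> U \<subseteq> K \<times> K}"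

definition power_carrier :: "'k set \<Rightarrow> (nat \<Rightarrow> 'k) set" where
  "power_carrier K = {f. \<forall>n. f n \<in> K}"

definition power_uniformity :: "'k set \<Rightarrow> ('k \<times> 'k) set set \<Rightarrow> ((nat \<Rightarrow> 'k) \<times> (nat \<Rightarrow> 'k)) set set" where
  "power_uniformity K \<Phi> =
     {U. U \<subseteq> power_carrier K \<times> power_carrier K \<and>
         (\<exists>F V. finite F \<and> (\<forall>i\<in>F. V i \<in> \<Phi>) \<and>
            {(f, g). f \<in> power_carrier K \<and> g \<in> power_carrier K \<and> (\<forall>i\<in>F. (f i, g i) \<in> V i)} \<subseteq> U)}"

abbreviation B_carrier :: "'k set \<Rightarrow> (nat \<Rightarrow> 'k) set" where
  "B_carrier K \<equiv> power_carrier K"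

abbreviation B_uniformity :: "'k set \<Rightarrow> ((nat \<Rightarrow> 'k) \<times> (nat \<Rightarrow> 'k)) set set" where
  "B_uniformity K \<equiv> power_uniformity K (discrete_uniformity K)"

end

theory Submission
  imports Defs
begin

lemma unif_facts:
  assumes "uniformity_on X \<Phi>"
  shows "\<Phi> \<noteq> {}" "\<forall>U\<in>\<Phi>. Id_on X \<subseteq> U \<and> U \<subseteq> X \<times> X"
    "\<forall>U V. U \<in> \<Phi> \<and> U \<subseteq> V \<and> V \<subseteq> X \<times> X \<longrightarrow> V \<in> \<Phi>"
    "\<forall>U\<in>\<Phi>. \<forall>V\<in>\<Phi>. U \<inter> V \<in> \<Phi>" "\<forall>U\<in>\<Phi>. converse U \<in> \<Phi>" "\<forall>U\<in>\<Phi>. \<exists>V\<in>\<Phi>. V O V \<subseteq> U"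
  using assms unfolding uniformity_on_def by - (elim conjE, assumption)+

lemma
  assumes "uniformity_on X \<Phi>"
  shows unif_ne: "\<Phi> \<noteq> {}"
    and unif_Id: "U \<in> \<Phi> \<Longrightarrow> Id_on X \<subseteq> U"
    and unif_sub: "U \<in> \<Phi> \<Longrightarrow> U \<subseteq> X \<times> X"
    and unif_up: "U \<in> \<Phi> \<Longrightarrow> U \<subseteq> V \<Longrightarrow> V \<subseteq> X \<times> X \<Longrightarrow> V \<in> \<Phi>"
    and unif_Int: "U \<in> \<Phi> \<Longrightarrow> V \<in> \<Phi> \<Longrightarrow> U \<inter> V \<in> \<Phi>"
proof -
  note F = unif_facts[OF assms]
  show "\<Phi> \<noteq> {}" by (rule F(1))
  show "U \<in> \<Phi> \<Longrightarrow> Id_on X \<subseteq> U" using F(2) by blast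
  show "U \<in> \<Phi> \<Longrightarrow> U \<subseteq> X \<times> X" using F(2) by blast
  show "U \<in> \<Phi> \<Longrightarrow> U \<subseteq> V \<Longrightarrow> V \<subseteq> X \<times> X \<Longrightarrow> V \<in> \<Phi>" using F(3) by blast
  show "U \<in> \<Phi> \<Longrightarrow> V \<in> \<Phi> \<Longrightarrow> U \<inter> V \<in> \<Phi>" using F(4) by blast
qed

lemma uniformity_onI:
  assumes "\<Phi> \<noteq> {}" "\<And>U. U \<in> \<Phi> \<Longrightarrow> Id_on X \<subseteq> U" "\<And>U. U \<in> \<Phi> \<Longrightarrow> U \<subseteq> X \<times> X"
    "\<And>U V. U \<in> \<Phi> \<Longrightarrow> U \<subseteq> V \<Longrightarrow> V \<subseteq> X \<times> X \<Longrightarrow> V \<in> \<Phi>"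
    "\<And>U V. U \<in> \<Phi> \<Longrightarrow> V \<in> \<Phi> \<Longrightarrow> U \<inter> V \<in> \<Phi>"
    "\<And>U. U \<in> \<Phi> \<Longrightarrow> converse U \<in> \<Phi>"
    "\<And>U. U \<in> \<Phi> \<Longrightarrow> \<exists>V\<in>\<Phi>. V O V \<subseteq> U"
  shows "uniformity_on X \<Phi>"
  unfolding uniformity_on_def
  apply (intro conjI ballI allI impI)
  subgoal by (rule assms(1))
  subgoal by (rule assms(2))
  subgoal by (rule assms(3))
  subgoal by (elim conjE) (rule assms(4))
  subgoal by (rule assms(5))
  subgoal by (rule assms(6))
  subgoal by (rule assms(7))
  done

lemma istop_u:
  assumes "uniformity_on X \<Phi>"
  shows "istopology (\<lambda>S. S \<subseteq> X \<and> (\<forall>x\<in>S. \<exists>U\<in>\<Phi>. {y. (x, y) \<in> U} \<subseteq> S))"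
proof -
  have int: "\<And>U V. U \<in> \<Phi> \<Longrightarrow> V \<in> \<Phi> \<Longrightarrow> U \<inter> V \<in> \<Phi>"
    using unif_Int[OF assms] by blast
  have A: "S \<inter> T \<subseteq> X \<and> (\<forall>x\<in>S \<inter> T. \<exists>U\<in>\<Phi>. {y. (x, y) \<in> U} \<subseteq> S \<inter> T)"
    if S: "S \<subseteq> X \<and> (\<forall>x\<in>S. \<exists>U\<in>\<Phi>. {y. (x, y) \<in> U} \<subseteq> S)"
    and T: "T \<subseteq> X \<and> (\<forall>x\<in>T. \<exists>U\<in>\<Phi>. {y. (x, y) \<in> U} \<subseteq> T)" for S T
  proof -
    have "\<exists>U\<in>\<Phi>. {y. (x, y) \<in> U} \<subseteq> S \<inter> T" if x: "x \<in> S \<inter> T" for x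
    proof -
      obtain U where U: "U \<in> \<Phi>" "{y. (x, y) \<in> U} \<subseteq> S" using S x by blast
      obtain V where V: "V \<in> \<Phi>" "{y. (x, y) \<in> V} \<subseteq> T" using T x by blast
      have "U \<inter> V \<in> \<Phi>" using int U V by blast
      moreover have "{y. (x, y) \<in> U \<inter> V} \<subseteq> S \<inter> T" using U V by blast
      ultimately show ?thesis by blast
    qed
    then show ?thesis using S by blast
  qed
  have B: "\<Union>\<K> \<subseteq> X \<and> (\<forall>x\<in>\<Union>\<K>. \<exists>U\<in>\<Phi>. {y. (x, y) \<in> U} \<subseteq> \<Union>\<K>)"
    if H: "\<forall>K\<in>\<K>. K \<subseteq> X \<and> (\<forall>x\<in>K. \<exists>U\<in>\<Phi>. {y. (x, y) \<in> U} \<subseteq> K)" for \<K>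
  proof (intro conjI ballI)
    show "\<Union>\<K> \<subseteq> X" using H by auto
    fix x assume "x \<in> \<Union>\<K>"
    then obtain K where K: "K \<in> \<K>" "x \<in> K" by blast
    then obtain U where "U \<in> \<Phi>" "{y. (x, y) \<in> U} \<subseteq> K" using H by blast
    then show "\<exists>U\<in>\<Phi>. {y. (x, y) \<in> U} \<subseteq> \<Union>\<K>" using K by blast
  qed
  show ?thesis unfolding istopology_def
    apply (rule conjI)
     apply (intro allI impI)
     apply (erule (1) A)
    apply (intro allI impI)
    apply (erule B)
    done
qed

lemma openin_u_eq:
  assumes "uniformity_on X \<Phi>"
  shows "openin (utopology X \<Phi>) = (\<lambda>S. S \<subseteq> X \<and> (\<forall>x\<in>S. \<exists>U\<in>\<Phi>. {y. (x, y) \<in> U} \<subseteq> S))"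
  unfolding utopology_def by (rule topology_inverse'[OF istop_u[OF assms]])

lemma openin_u:
  assumes "uniformity_on X \<Phi>"
  shows "openin (utopology X \<Phi>) S \<longleftrightarrow> S \<subseteq> X \<and> (\<forall>x\<in>S. \<exists>U\<in>\<Phi>. {y. (x, y) \<in> U} \<subseteq> S)"
  by (subst openin_u_eq[OF assms]) (rule refl)

lemma topspace_u:
  assumes "uniformity_on X \<Phi>"
  shows "topspace (utopology X \<Phi>) = X"
proof -
  obtain U where U: "U \<in> \<Phi>" "U \<subseteq> X \<times> X" using unif_ne[OF assms] unif_sub[OF assms] by blast
  have "\<forall>x\<in>X. \<exists>U\<in>\<Phi>. {y. (x, y) \<in> U} \<subseteq> X" using U by auto
  then have "openin (utopology X \<Phi>) X" using openin_u[OF assms] by simp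
  moreover have "\<And>S. openin (utopology X \<Phi>) S \<Longrightarrow> S \<subseteq> X" using openin_u[OF assms] by simp
  ultimately show ?thesis unfolding topspace_def
    by (intro subset_antisym Union_least Union_upper) auto
qed

definition cyl :: "'k set \<Rightarrow> nat \<Rightarrow> ((nat \<Rightarrow> 'k) \<times> (nat \<Rightarrow> 'k)) set" where
  "cyl K n = {(f, g). f \<in> power_carrier K \<and> g \<in> power_carrier K \<and> (\<forall>i\<le>n. f i = g i)}"

lemma B_unif_char:
  "B_uniformity K = {U. U \<subseteq> power_carrier K \<times> power_carrier K \<and> (\<exists>n. cyl K n \<subseteq> U)}"
proof (intro set_eqI iffI)
  fix U assume "U \<in> B_uniformity K"
  then obtain F V where U: "U \<subseteq> power_carrier K \<times> power_carrier K" "finite F"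
     "\<forall>i\<in>F. V i \<in> discrete_uniformity K"
     "{(f, g). f \<in> power_carrier K \<and> g \<in> power_carrier K \<and> (\<forall>i\<in>F. (f i, g i) \<in> V i)} \<subseteq> U"
    unfolding power_uniformity_def by blast
  obtain n where n: "F \<subseteq> {..<n}" using finite_nat_bounded U(2) by blast
  have "cyl K n \<subseteq> U"
  proof
    fix p assume "p \<in> cyl K n"
    then obtain f g where p: "p = (f, g)" "f \<in> power_carrier K" "g \<in> power_carrier K" "\<forall>i\<le>n. f i = g i"
      unfolding cyl_def by blast
    have "\<forall>i\<in>F. (f i, g i) \<in> V i"
    proof
      fix i assume i: "i \<in> F"
      then have "f i = g i" using n p by auto
      moreover have "f i \<in> K" using p unfolding power_carrier_def by auto
      ultimately show "(f i, g i) \<in> V i" using U(3) i unfolding discrete_uniformity_def by auto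
    qed
    then show "p \<in> U" using U(4) p by blast
  qed
  then show "U \<in> {U. U \<subseteq> power_carrier K \<times> power_carrier K \<and> (\<exists>n. cyl K n \<subseteq> U)}" using U by blast
next
  fix U assume "U \<in> {U. U \<subseteq> power_carrier K \<times> power_carrier K \<and> (\<exists>n. cyl K n \<subseteq> U)}"
  then obtain n where U: "U \<subseteq> power_carrier K \<times> power_carrier K" "cyl K n \<subseteq> U" by blast
  have "Id_on K \<in> discrete_uniformity K" unfolding discrete_uniformity_def by auto
  moreover have "{(f, g). f \<in> power_carrier K \<and> g \<in> power_carrier K \<and> (\<forall>i\<in>{..n}. (f i, g i) \<in> Id_on K)} \<subseteq> U"
    using U(2) unfolding cyl_def by (force simp: Id_on_def)
  ultimately show "U \<in> B_uniformity K" unfolding power_uniformity_def using U(1)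
    by (intro CollectI conjI exI[of _ "{..n}"] exI[of _ "\<lambda>_. Id_on K"]) auto
qed

lemma cyl_mono: "m \<le> n \<Longrightarrow> cyl K n \<subseteq> cyl K m"
  unfolding cyl_def by auto

lemma cyl_in: "cyl K n \<in> B_uniformity K"
  unfolding B_unif_char cyl_def by blast

lemma cyl_equiv: "equiv (power_carrier K) (cyl K n)"
  unfolding cyl_def equiv_def refl_on_def sym_def trans_def by auto

lemma B_uniformity_on: "uniformity_on (power_carrier K) (B_uniformity K)"
proof (rule uniformity_onI)
  show "B_uniformity K \<noteq> {}" using cyl_in by blast
next
  fix U assume "U \<in> B_uniformity K"
  then obtain n where U: "U \<subseteq> power_carrier K \<times> power_carrier K" "cyl K n \<subseteq> U"
    unfolding B_unif_char by blast
  show "Id_on (power_carrier K) \<subseteq> U" using U(2) unfolding cyl_def by auto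
  show "U \<subseteq> power_carrier K \<times> power_carrier K" by fact
  show "converse U \<in> B_uniformity K" unfolding B_unif_char using U
    by (intro CollectI conjI exI[of _ n]) (auto simp: cyl_def)
  show "\<exists>V\<in>B_uniformity K. V O V \<subseteq> U"
    using cyl_in[of K n] U(2) by (intro bexI[of _ "cyl K n"]) (auto simp: cyl_def)
next
  fix U V assume "U \<in> B_uniformity K" "U \<subseteq> V" "V \<subseteq> power_carrier K \<times> power_carrier K"
  then show "V \<in> B_uniformity K" unfolding B_unif_char by blast
next
  fix U V assume "U \<in> B_uniformity K" "V \<in> B_uniformity K"
  then obtain n m where "U \<subseteq> power_carrier K \<times> power_carrier K" "cyl K n \<subseteq> U"
     "cyl K m \<subseteq> V" unfolding B_unif_char by blast
  then show "U \<inter> V \<in> B_uniformity K" unfolding B_unif_char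
    using cyl_mono[of n "max n m" K] cyl_mono[of m "max n m" K]
    by (intro CollectI conjI exI[of _ "max n m"]) auto
qed

lemma B_sep: "\<Inter>(B_uniformity K) = Id_on (power_carrier K)"
proof
  show "\<Inter>(B_uniformity K) \<subseteq> Id_on (power_carrier K)"
  proof
    fix p assume p: "p \<in> \<Inter>(B_uniformity K)"
    then have "\<forall>n. p \<in> cyl K n" using cyl_in by blast
    then obtain f g where "p = (f, g)" "f \<in> power_carrier K" "\<forall>n. \<forall>i\<le>n. f i = g i"
      unfolding cyl_def by blast
    moreover have "f = g" using calculation(3) by (intro ext) blast
    ultimately show "p \<in> Id_on (power_carrier K)" by auto
  qed
  show "Id_on (power_carrier K) \<subseteq> \<Inter>(B_uniformity K)"
    using unif_Id[OF B_uniformity_on[of K]] by blast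
qed

lemma B_na: "non_archimedean (power_carrier K) (B_uniformity K)"
  unfolding non_archimedean_def
proof
  fix U assume "U \<in> B_uniformity K"
  then obtain n where "cyl K n \<subseteq> U" unfolding B_unif_char by blast
  then show "\<exists>V\<in>B_uniformity K. equiv (power_carrier K) V \<and> V \<subseteq> U"
    using cyl_in[of K n] cyl_equiv[of K n] by blast
qed

definition dB :: "(nat \<Rightarrow> 'k) \<Rightarrow> (nat \<Rightarrow> 'k) \<Rightarrow> real" where
  "dB f g = (if f = g then 0 else (1/2) ^ (LEAST i. f i \<noteq> g i))"

lemma dB_less: "dB f g < (1/2)^n \<longleftrightarrow> (\<forall>i\<le>n. f i = g i)"
proof (cases "f = g")
  case True then show ?thesis by (simp add: dB_def)
next
  case False
  then obtain j where "f j \<noteq> g j" by (auto simp: fun_eq_iff)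
  define m where "m = (LEAST i. f i \<noteq> g i)"
  have fm: "f m \<noteq> g m" unfolding m_def by (rule LeastI) fact
  have below: "\<And>i. i < m \<Longrightarrow> f i = g i" unfolding m_def using not_less_Least by blast
  have "dB f g = (1/2)^m" using False by (simp add: dB_def m_def)
  then have "dB f g < (1/2)^n \<longleftrightarrow> n < m" by simp
  also have "\<dots> \<longleftrightarrow> (\<forall>i\<le>n. f i = g i)"
    using fm below by (metis le_less_trans linorder_not_le order_refl)
  finally show ?thesis .
qed

lemma dB_nonneg: "0 \<le> dB f g" by (simp add: dB_def)

lemma dB_commute: "dB f g = dB g f"
  unfolding dB_def by (simp add: eq_commute)

lemma dB_pos: "f \<noteq> g \<Longrightarrow> dB f g = (1/2) ^ (LEAST i. f i \<noteq> g i)"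
  by (simp add: dB_def)

lemma dB_triangle: "dB f h \<le> dB f g + dB g h"
proof (cases "f = h \<or> f = g \<or> g = h")
  case True then show ?thesis using dB_nonneg[of f g] dB_nonneg[of g h] by (auto simp: dB_def)
next
  case False
  define m1 where "m1 = (LEAST i. f i \<noteq> g i)"
  define m2 where "m2 = (LEAST i. g i \<noteq> h i)"
  define m where "m = (LEAST i. f i \<noteq> h i)"
  obtain j where "f j \<noteq> h j" using False by (auto simp: fun_eq_iff)
  then have fm: "f m \<noteq> h m" unfolding m_def by (rule LeastI)
  have "min m1 m2 \<le> m"
  proof (rule ccontr)
    assume "\<not> min m1 m2 \<le> m"
    then have "m < m1" "m < m2" by auto
    then have "f m = g m" "g m = h m" unfolding m1_def m2_def using not_less_Least by blast+
    then show False using fm by simp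
  qed
  then have "(1/2::real)^m \<le> (1/2)^(min m1 m2)" by (rule power_decreasing) auto
  also have "\<dots> \<le> (1/2)^m1 + (1/2)^m2" by (cases "m1 \<le> m2") (auto simp: min_def)
  finally show ?thesis using False by (simp add: dB_def m_def m1_def m2_def)
qed

lemma B_metric: "Metric_space (power_carrier K) dB"
proof
  fix x y z :: "nat \<Rightarrow> 'a"
  show "0 \<le> dB x y" by (rule dB_nonneg)
  show "dB x y = dB y x" by (rule dB_commute)
  show "dB x y = 0 \<longleftrightarrow> x = y" by (simp add: dB_def)
  show "dB x z \<le> dB x y + dB y z" by (rule dB_triangle)
qed

lemma ball_cyl: "{(x, y). x \<in> power_carrier K \<and> y \<in> power_carrier K \<and> dB x y < (1/2)^n} = cyl K n"
  unfolding cyl_def dB_less by blast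

lemma B_metric_unif: "metric_uniformity (power_carrier K) dB = B_uniformity K"
proof (intro set_eqI iffI)
  fix U assume "U \<in> metric_uniformity (power_carrier K) dB"
  then obtain \<epsilon> where U: "U \<subseteq> power_carrier K \<times> power_carrier K" "\<epsilon> > 0"
    "{(x, y). x \<in> power_carrier K \<and> y \<in> power_carrier K \<and> dB x y < \<epsilon>} \<subseteq> U"
    unfolding metric_uniformity_def by blast
  obtain n where n: "(1/2::real)^n < \<epsilon>" using real_arch_pow_inv[OF U(2), of "1/2"] by auto
  have "cyl K n \<subseteq> U" using U(3) n unfolding ball_cyl[symmetric] by auto
  then show "U \<in> B_uniformity K" unfolding B_unif_char using U(1) by blast
next
  fix U assume "U \<in> B_uniformity K"
  then obtain n where U: "U \<subseteq> power_carrier K \<times> power_carrier K" "cyl K n \<subseteq> U"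
    unfolding B_unif_char by blast
  then show "U \<in> metric_uniformity (power_carrier K) dB"
    unfolding metric_uniformity_def ball_cyl[symmetric]
    by (intro CollectI conjI exI[of _ "(1/2)^n"]) auto
qed

lemma B_mcomplete: "Metric_space.mcomplete (power_carrier K) dB"
proof -
  interpret M: Metric_space "power_carrier K" dB by (rule B_metric)
  show ?thesis unfolding M.mcomplete_def
  proof (intro allI impI)
    fix \<sigma> assume c: "M.MCauchy \<sigma>"
    then have rs: "range \<sigma> \<subseteq> power_carrier K" unfolding M.MCauchy_def by blast
    have "\<forall>i. \<exists>N. \<forall>n n'. N \<le> n \<longrightarrow> N \<le> n' \<longrightarrow> dB (\<sigma> n) (\<sigma> n') < (1/2)^i"
      using c unfolding M.MCauchy_def by simp
    then obtain N where N: "\<And>i n n'. N i \<le> n \<Longrightarrow> N i \<le> n' \<Longrightarrow> dB (\<sigma> n) (\<sigma> n') < (1/2)^i"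
      by metis
    define L where "L i = \<sigma> (N i) i" for i
    have LC: "L \<in> power_carrier K" using rs unfolding L_def power_carrier_def by auto
    have "limitin M.mtopology \<sigma> L sequentially"
      unfolding M.limitin_metric
    proof (intro conjI allI impI LC)
      fix \<epsilon> :: real assume "\<epsilon> > 0"
      obtain n where n: "(1/2::real)^n < \<epsilon>" using real_arch_pow_inv[OF \<open>\<epsilon> > 0\<close>, of "1/2"] by auto
      define M0 where "M0 = Max (N ` {..n})"
      have "\<sigma> j \<in> power_carrier K \<and> dB (\<sigma> j) L < \<epsilon>" if "M0 \<le> j" for j
      proof -
        have "\<sigma> j i = L i" if "i \<le> n" for i
        proof -
          have "N i \<le> M0" unfolding M0_def using that by (intro Max_ge) auto
          then have "dB (\<sigma> j) (\<sigma> (N i)) < (1/2)^i" using \<open>M0 \<le> j\<close> by (intro N) auto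
          then show ?thesis unfolding dB_less L_def by auto
        qed
        then have "dB (\<sigma> j) L < (1/2)^n" unfolding dB_less by auto
        then show ?thesis using n rs by auto
      qed
      then show "\<forall>\<^sub>F j in sequentially. \<sigma> j \<in> power_carrier K \<and> dB (\<sigma> j) L < \<epsilon>"
        unfolding eventually_sequentially by blast
    qed
    then show "\<exists>x. limitin M.mtopology \<sigma> x sequentially" by blast
  qed
qed

fun enc :: "('k \<times> 'k \<Rightarrow> 'k) \<Rightarrow> 'k \<Rightarrow> 'k list \<Rightarrow> 'k" where
  "enc p k0 [] = k0"
| "enc p k0 (k # l) = p (k, enc p k0 l)"

lemma enc_in: "p ` (K \<times> K) \<subseteq> K \<Longrightarrow> k0 \<in> K \<Longrightarrow> l \<in> lists K \<Longrightarrow> enc p k0 l \<in> K"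
  by (induction l) auto

lemma enc_inj:
  assumes "inj_on p (K \<times> K)" "p ` (K \<times> K) \<subseteq> K" "k0 \<in> K"
  shows "l \<in> lists K \<Longrightarrow> l' \<in> lists K \<Longrightarrow> length l = length l' \<Longrightarrow> enc p k0 l = enc p k0 l' \<Longrightarrow> l = l'"
proof (induction l arbitrary: l')
  case Nil then show ?case by simp
next
  case (Cons k l)
  then obtain k' m where l': "l' = k' # m" by (cases l') auto
  have "(k, enc p k0 l) \<in> K \<times> K" "(k', enc p k0 m) \<in> K \<times> K"
    using Cons.prems l' enc_in[OF assms(2,3)] by auto
  moreover have "p (k, enc p k0 l) = p (k', enc p k0 m)" using Cons.prems l' by simp
  ultimately have "k = k'" "enc p k0 l = enc p k0 m" using assms(1) unfolding inj_on_def by blast+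
  then show ?case using Cons l' by auto
qed

lemma lists_lepoll_infinite:
  assumes "infinite (K :: 'k set)"
  shows "lists K \<lesssim> K"
proof -
  obtain p where p: "inj_on p (K \<times> K)" "p ` (K \<times> K) \<subseteq> K"
    using card_of_ordLeq[of "K \<times> K" K] card_of_Times_same_infinite[OF assms] ordIso_iff_ordLeq by blast
  obtain k0 where k0: "k0 \<in> K" using assms by (metis finite.emptyI ex_in_conv)
  have "inj_on (\<lambda>l. (length l, enc p k0 l)) (lists K)"
    by (rule inj_onI) (use enc_inj[OF p k0] in auto)
  moreover have "(\<lambda>l. (length l, enc p k0 l)) ` lists K \<subseteq> (UNIV :: nat set) \<times> K"
    using enc_in[OF p(2) k0] by auto
  ultimately have "lists K \<lesssim> (UNIV :: nat set) \<times> K" unfolding lepoll_def by blast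
  also have "(UNIV :: nat set) \<times> K \<lesssim> K \<times> K"
    using times_lepoll_mono[OF iffD1[OF infinite_le_lepoll assms] lepoll_refl] .
  also have "K \<times> K \<lesssim> K" unfolding lepoll_def using p by blast
  finally show ?thesis .
qed

definition cset :: "'k set \<Rightarrow> 'k list \<Rightarrow> (nat \<Rightarrow> 'k) set" where
  "cset K l = {g \<in> power_carrier K. \<forall>i<length l. g i = l ! i}"

lemma B_weight:
  assumes "infinite K"
  shows "weight_le (utopology (power_carrier K) (B_uniformity K)) K"
proof -
  note op = openin_u[OF B_uniformity_on[of K]]
  have base: "open_base_of (utopology (power_carrier K) (B_uniformity K)) (cset K ` lists K)"
    unfolding open_base_of_def
  proof (intro conjI ballI allI impI)
    fix S assume "S \<in> cset K ` lists K"
    then obtain l where S: "S = cset K l" by blast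
    have "{y. (x, y) \<in> cyl K (length l)} \<subseteq> S" if "x \<in> S" for x
      using that unfolding S cset_def cyl_def by auto
    then show "openin (utopology (power_carrier K) (B_uniformity K)) S"
      unfolding op using cyl_in[of K "length l"] S cset_def by blast
  next
    fix S assume "openin (utopology (power_carrier K) (B_uniformity K)) S"
    then have S: "S \<subseteq> power_carrier K" "\<forall>x\<in>S. \<exists>U\<in>B_uniformity K. {y. (x, y) \<in> U} \<subseteq> S"
      unfolding op by auto
    have "S \<subseteq> \<Union>{B \<in> cset K ` lists K. B \<subseteq> S}"
    proof
      fix x assume x: "x \<in> S"
      then obtain U where U: "U \<in> B_uniformity K" "{y. (x, y) \<in> U} \<subseteq> S" using S by blast
      then obtain n where n: "cyl K n \<subseteq> U" unfolding B_unif_char by blast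
      define l where "l = map x [0..<Suc n]"
      have xC: "x \<in> power_carrier K" using x S by blast
      then have l: "l \<in> lists K" unfolding l_def power_carrier_def by auto
      have "cset K l \<subseteq> {y. (x, y) \<in> cyl K n}"
        using xC unfolding cset_def cyl_def l_def by (auto simp del: upt_Suc)
      then have "cset K l \<subseteq> S" using n U(2) by blast
      moreover have "x \<in> cset K l" using xC unfolding cset_def l_def by (auto simp del: upt_Suc)
      ultimately show "x \<in> \<Union>{B \<in> cset K ` lists K. B \<subseteq> S}" using l by blast
    qed
    then show "\<exists>\<C>\<subseteq>cset K ` lists K. \<Union>\<C> = S"
      by (intro exI[of _ "{B \<in> cset K ` lists K. B \<subseteq> S}"]) auto
  qed
  have "cset K ` lists K \<lesssim> K"
    using image_lepoll lists_lepoll_infinite[OF assms] by (rule lepoll_trans)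
  then show ?thesis unfolding weight_le_def using base by blast
qed

lemma B_class:
  assumes "infinite K"
  shows "NA_cm_class K (power_carrier K) (B_uniformity K)"
  unfolding NA_cm_class_def uniform_space_on_def complete_metric_uniformity_def
  using B_uniformity_on B_sep B_na B_weight[OF assms] B_metric B_mcomplete B_metric_unif
  by metis

lemma eqv_refl: "equiv Y R \<Longrightarrow> x \<in> Y \<Longrightarrow> (x, x) \<in> R"
  unfolding equiv_def refl_on_def by blast
lemma eqv_sym: "equiv Y R \<Longrightarrow> (x, y) \<in> R \<Longrightarrow> (y, x) \<in> R"
  unfolding equiv_def sym_def by blast
lemma eqv_trans: "equiv Y R \<Longrightarrow> (x, y) \<in> R \<Longrightarrow> (y, z) \<in> R \<Longrightarrow> (x, z) \<in> R"
  unfolding equiv_def trans_def by blast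
lemma eqv_sub: "equiv Y R \<Longrightarrow> (x, y) \<in> R \<Longrightarrow> x \<in> Y \<and> y \<in> Y"
  unfolding equiv_def refl_on_def by blast

fun pseq :: "(nat \<Rightarrow> ('b \<times> 'b) set) \<Rightarrow> ('k \<Rightarrow> 'b) \<Rightarrow> (nat \<Rightarrow> 'k) \<Rightarrow> nat \<Rightarrow> 'b" where
  "pseq E a x 0 = a (x 0)"
| "pseq E a x (Suc n) = (if (pseq E a x n, a (x (Suc n))) \<in> E n then a (x (Suc n)) else pseq E a x n)"

lemma pseq_dep: "(\<forall>i\<le>n. x i = x' i) \<Longrightarrow> pseq E a x n = pseq E a x' n"
  by (induction n) auto

lemma main_constr:
  fixes K :: "'k set" and Y :: "'b set"
  assumes uY: "uniformity_on Y \<Psi>" and sepY: "\<Inter>\<Psi> = Id_on Y"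
    and Eeq: "\<And>n. equiv Y (E n)" and E\<Psi>: "\<And>n. E n \<in> \<Psi>" and Edec: "\<And>n. E (Suc n) \<subseteq> E n"
    and Ebase: "\<And>U. U \<in> \<Psi> \<Longrightarrow> \<exists>n. E n \<subseteq> U"
    and aY: "a ` K \<subseteq> Y" and adense: "\<And>y n. y \<in> Y \<Longrightarrow> \<exists>k\<in>K. (y, a k) \<in> E n"
    and compl: "\<And>p. (\<forall>n. p n \<in> Y \<and> (p n, p (Suc n)) \<in> E n) \<Longrightarrow> \<exists>z\<in>Y. \<forall>n. (p n, z) \<in> E n"
  shows "\<exists>f. uniformly_continuous_on_u (power_carrier K) (B_uniformity K) Y \<Psi> f
           \<and> f ` power_carrier K = Y
           \<and> quotient_map (utopology (power_carrier K) (B_uniformity K)) (utopology Y \<Psi>) f"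
proof -
  let ?C = "power_carrier K"
  let ?p = "pseq E a"
  have Emono: "m \<le> n \<Longrightarrow> E n \<subseteq> E m" for m n
    using lift_Suc_antimono_le[of E, OF Edec] by blast
  have pY: "?p x n \<in> Y" if "x \<in> ?C" for x n
    using that aY by (induction n) (auto simp: power_carrier_def)
  have pstep: "(?p x n, ?p x (Suc n)) \<in> E n" if "x \<in> ?C" for x n
    using eqv_refl[OF Eeq pY[OF that]] by auto
  define f where "f x = (SOME z. z \<in> Y \<and> (\<forall>n. (?p x n, z) \<in> E n))" for x
  have fprop: "f x \<in> Y \<and> (\<forall>n. (?p x n, f x) \<in> E n)" if "x \<in> ?C" for x
  proof -
    have "\<exists>z. z \<in> Y \<and> (\<forall>n. (?p x n, z) \<in> E n)"
      using compl[of "?p x"] pY[OF that] pstep[OF that] by blast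
    then show ?thesis unfolding f_def by (rule someI_ex)
  qed
  have uniq: "z = z'" if "z \<in> Y" "\<forall>n. (z, z') \<in> E n" for z z'
  proof -
    have "(z, z') \<in> \<Inter>\<Psi>"
    proof
      fix U assume "U \<in> \<Psi>"
      then obtain n where "E n \<subseteq> U" using Ebase by blast
      then show "(z, z') \<in> U" using that by blast
    qed
    then show ?thesis using sepY by auto
  qed
  define c where "c y i = (SOME k. k \<in> K \<and> (y, a k) \<in> E i)" for y i
  have cprop: "c y i \<in> K \<and> (y, a (c y i)) \<in> E i" if "y \<in> Y" for y i
    unfolding c_def using adense[OF that, of i] by (rule someI_ex[OF bexE]) blast
  have key: "\<exists>x'\<in>?C. (\<forall>i\<le>n. x' i = x i) \<and> f x' = y"
    if x: "x \<in> ?C" and y: "y \<in> Y" and rel: "(?p x n, y) \<in> E n" for x y n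
  proof -
    define x' where "x' i = (if i \<le> n then x i else c y i)" for i
    have x'C: "x' \<in> ?C" using x cprop[OF y] unfolding x'_def power_carrier_def by auto
    have agree: "\<forall>i\<le>n. x' i = x i" unfolding x'_def by auto
    have P: "(?p x' (n + m), y) \<in> E (n + m)" for m
    proof (induction m)
      case 0
      then show ?case using rel pseq_dep[OF agree, of E a] by simp
    next
      case (Suc m)
      let ?q = "?p x' (n + m)"
      have xs: "x' (Suc (n + m)) = c y (Suc (n + m))" unfolding x'_def by auto
      have ya: "(y, a (c y (Suc (n + m)))) \<in> E (Suc (n + m))" using cprop[OF y] by blast
      then have "(y, a (c y (Suc (n + m)))) \<in> E (n + m)" using Edec by blast
      then have "(?q, a (c y (Suc (n + m)))) \<in> E (n + m)" using Suc eqv_trans[OF Eeq] by blast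
      then have "?p x' (Suc (n + m)) = a (c y (Suc (n + m)))" using xs by simp
      then show ?case using eqv_sym[OF Eeq ya] by simp
    qed
    have "\<forall>m. (y, f x') \<in> E m"
    proof
      fix m
      have "(?p x' (n + m), f x') \<in> E (n + m)" using fprop[OF x'C] by blast
      then have "(y, f x') \<in> E (n + m)" using P[of m] eqv_sym[OF Eeq] eqv_trans[OF Eeq] by blast
      then show "(y, f x') \<in> E m" using Emono[of m "n + m"] by auto
    qed
    then have "f x' = y" using uniq[OF y] by (metis)
    then show ?thesis using x'C agree by blast
  qed
  have fC: "f ` ?C \<subseteq> Y" using fprop by blast
  have surj: "f ` ?C = Y"
  proof
    show "Y \<subseteq> f ` ?C"
    proof
      fix y assume y: "y \<in> Y"
      define x where "x i = c y i" for i
      have xC: "x \<in> ?C" using cprop[OF y] unfolding x_def power_carrier_def by auto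
      have "(?p x 0, y) \<in> E 0" using cprop[OF y, of 0] eqv_sym[OF Eeq] unfolding x_def by simp
      then obtain x' where "x' \<in> ?C" "f x' = y" using key[OF xC y] by blast
      then show "y \<in> f ` ?C" by blast
    qed
  qed (rule fC)
  have close: "(f x, f x') \<in> E n" if "(x, x') \<in> cyl K n" for x x' n
  proof -
    have xx: "x \<in> ?C" "x' \<in> ?C" "\<forall>i\<le>n. x i = x' i" using that unfolding cyl_def by auto
    have "?p x n = ?p x' n" by (rule pseq_dep[OF xx(3)])
    then show ?thesis using fprop[OF xx(1)] fprop[OF xx(2)] eqv_sym[OF Eeq] eqv_trans[OF Eeq] by metis
  qed
  have uc: "uniformly_continuous_on_u ?C (B_uniformity K) Y \<Psi> f"
    unfolding uniformly_continuous_on_u_def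
  proof (intro conjI ballI fC)
    fix V assume "V \<in> \<Psi>"
    then obtain n where n: "E n \<subseteq> V" using Ebase by blast
    show "\<exists>U\<in>B_uniformity K. \<forall>(x, y)\<in>U. (f x, f y) \<in> V"
      using cyl_in[of K n] close n by blast
  qed
  note opB = openin_u[OF B_uniformity_on[of K]]
  note opY = openin_u[OF uY]
  have qm: "quotient_map (utopology ?C (B_uniformity K)) (utopology Y \<Psi>) f"
    unfolding quotient_map_def topspace_u[OF B_uniformity_on] topspace_u[OF uY]
  proof (intro conjI surj allI impI)
    fix U assume UY: "U \<subseteq> Y"
    show "openin (utopology ?C (B_uniformity K)) {x \<in> ?C. f x \<in> U} = openin (utopology Y \<Psi>) U"
    proof
      assume O: "openin (utopology ?C (B_uniformity K)) {x \<in> ?C. f x \<in> U}"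
      show "openin (utopology Y \<Psi>) U"
        unfolding opY
      proof (intro conjI ballI UY)
        fix y assume "y \<in> U"
        then obtain x where x: "x \<in> ?C" "f x = y" "f x \<in> U" using surj UY by force
        then obtain W where W: "W \<in> B_uniformity K" "{x'. (x, x') \<in> W} \<subseteq> {x \<in> ?C. f x \<in> U}"
          using O unfolding opB by blast
        then obtain n where n: "cyl K n \<subseteq> W" unfolding B_unif_char by blast
        have "{z. (y, z) \<in> E n} \<subseteq> U"
        proof
          fix z assume "z \<in> {z. (y, z) \<in> E n}"
          then have yz: "(y, z) \<in> E n" by simp
          then have zY: "z \<in> Y" using eqv_sub[OF Eeq] by blast
          have "(?p x n, z) \<in> E n" using fprop[OF x(1)] x(2) yz eqv_trans[OF Eeq] by blast
          then obtain x' where x': "x' \<in> ?C" "\<forall>i\<le>n. x' i = x i" "f x' = z" using key[OF x(1) zY] by blast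
          then have "(x, x') \<in> cyl K n" using x(1) unfolding cyl_def by auto
          then have "x' \<in> {x \<in> ?C. f x \<in> U}" using n W(2) by blast
          then show "z \<in> U" using x' by simp
        qed
        then show "\<exists>U'\<in>\<Psi>. {z. (y, z) \<in> U'} \<subseteq> U" using E\<Psi> by blast
      qed
    next
      assume O: "openin (utopology Y \<Psi>) U"
      show "openin (utopology ?C (B_uniformity K)) {x \<in> ?C. f x \<in> U}"
        unfolding opB
      proof (intro conjI ballI)
        show "{x \<in> ?C. f x \<in> U} \<subseteq> ?C" by blast
        fix x assume x: "x \<in> {x \<in> ?C. f x \<in> U}"
        then obtain V where V: "V \<in> \<Psi>" "{z. (f x, z) \<in> V} \<subseteq> U" using O unfolding opY by blast
        then obtain n where n: "E n \<subseteq> V" using Ebase by blast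
        have "{x'. (x, x') \<in> cyl K n} \<subseteq> {x \<in> ?C. f x \<in> U}"
        proof
          fix x' assume "x' \<in> {x'. (x, x') \<in> cyl K n}"
          then have "(x, x') \<in> cyl K n" by simp
          then have "x' \<in> ?C" "(f x, f x') \<in> V" using close n unfolding cyl_def by auto
          then show "x' \<in> {x \<in> ?C. f x \<in> U}" using V(2) by blast
        qed
        then show "\<exists>W\<in>B_uniformity K. {x'. (x, x') \<in> W} \<subseteq> {x \<in> ?C. f x \<in> U}"
          using cyl_in by blast
      qed
    qed
  qed
  show ?thesis using uc surj qm by blast
qed

definition rb :: "'b set \<Rightarrow> ('b \<Rightarrow> 'b \<Rightarrow> real) \<Rightarrow> real \<Rightarrow> ('b \<times> 'b) set" where
  "rb Y d r = {(x, y). x \<in> Y \<and> y \<in> Y \<and> d x y < r}"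

fun Eseq :: "('b \<times> 'b) set set \<Rightarrow> ('b \<Rightarrow> 'b \<Rightarrow> real) \<Rightarrow> 'b set \<Rightarrow> nat \<Rightarrow> ('b \<times> 'b) set" where
  "Eseq \<Psi> d Y 0 = (SOME V. V \<in> \<Psi> \<and> equiv Y V \<and> V \<subseteq> rb Y d 1)"
| "Eseq \<Psi> d Y (Suc n) = (SOME V. V \<in> \<Psi> \<and> equiv Y V \<and> V \<subseteq> Eseq \<Psi> d Y n \<inter> rb Y d ((1/2)^Suc n))"

theorem lemma6p2:
  fixes K :: "'k set" and Y :: "'b set" and \<Psi> :: "('b \<times> 'b) set set"
  assumes "infinite K"
    and "NA_cm_class K Y \<Psi>"
    and "Y \<noteq> {}"
  shows "NA_cm_class K (B_carrier K) (B_uniformity K)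
    \<and> (\<exists>f. uniformly_continuous_on_u (B_carrier K) (B_uniformity K) Y \<Psi> f
           \<and> f ` B_carrier K = Y
           \<and> quotient_map (utopology (B_carrier K) (B_uniformity K)) (utopology Y \<Psi>) f)"
proof (rule conjI)
  show "NA_cm_class K (B_carrier K) (B_uniformity K)" by (rule B_class[OF assms(1)])
  have uY: "uniformity_on Y \<Psi>" and sepY: "\<Inter>\<Psi> = Id_on Y" and na: "non_archimedean Y \<Psi>"
    and cm: "complete_metric_uniformity Y \<Psi>" and wt: "weight_le (utopology Y \<Psi>) K"
    using assms(2) unfolding NA_cm_class_def uniform_space_on_def by blast+
  obtain d where met: "Metric_space Y d" and mc: "Metric_space.mcomplete Y d"
    and \<Psi>d: "\<Psi> = metric_uniformity Y d"
    using cm unfolding complete_metric_uniformity_def by blast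
  interpret M: Metric_space Y d by (rule met)
  have rb\<Psi>: "rb Y d r \<in> \<Psi>" if "r > 0" for r
    unfolding \<Psi>d metric_uniformity_def rb_def using that by blast
  have naD: "\<exists>V. V \<in> \<Psi> \<and> equiv Y V \<and> V \<subseteq> U" if "U \<in> \<Psi>" for U
    using na that unfolding non_archimedean_def by blast
  define E where "E = Eseq \<Psi> d Y"
  have Eprop: "E n \<in> \<Psi> \<and> equiv Y (E n) \<and> E n \<subseteq> rb Y d ((1/2)^n) \<and> E (Suc n) \<subseteq> E n" for n
  proof (induction n)
    case 0
    have "\<exists>V. V \<in> \<Psi> \<and> equiv Y V \<and> V \<subseteq> rb Y d 1" using naD[OF rb\<Psi>[of 1]] by simp
    then have A: "E 0 \<in> \<Psi> \<and> equiv Y (E 0) \<and> E 0 \<subseteq> rb Y d 1"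
      unfolding E_def Eseq.simps by (rule someI_ex)
    then have "E 0 \<inter> rb Y d ((1/2)^Suc 0) \<in> \<Psi>" using unif_Int[OF uY] rb\<Psi> by simp
    then have "\<exists>V. V \<in> \<Psi> \<and> equiv Y V \<and> V \<subseteq> E 0 \<inter> rb Y d ((1/2)^Suc 0)" using naD by blast
    then have "E (Suc 0) \<subseteq> E 0" unfolding E_def Eseq.simps by (rule someI2_ex) blast
    then show ?case using A by simp
  next
    case (Suc n)
    have B: "E n \<inter> rb Y d ((1/2)^Suc n) \<in> \<Psi>" using unif_Int[OF uY] rb\<Psi> Suc by simp
    then have "\<exists>V. V \<in> \<Psi> \<and> equiv Y V \<and> V \<subseteq> E n \<inter> rb Y d ((1/2)^Suc n)" using naD by blast
    then have A: "E (Suc n) \<in> \<Psi> \<and> equiv Y (E (Suc n)) \<and> E (Suc n) \<subseteq> E n \<inter> rb Y d ((1/2)^Suc n)"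
      unfolding E_def Eseq.simps by (rule someI_ex)
    then have "E (Suc n) \<inter> rb Y d ((1/2)^Suc (Suc n)) \<in> \<Psi>" using unif_Int[OF uY] rb\<Psi> by simp
    then have "\<exists>V. V \<in> \<Psi> \<and> equiv Y V \<and> V \<subseteq> E (Suc n) \<inter> rb Y d ((1/2)^Suc (Suc n))" using naD by blast
    then have "E (Suc (Suc n)) \<subseteq> E (Suc n)" unfolding E_def Eseq.simps by (rule someI2_ex) blast
    then show ?case using A by simp
  qed
  have Eeq: "\<And>n. equiv Y (E n)" and E\<Psi>: "\<And>n. E n \<in> \<Psi>" and Edec: "\<And>n. E (Suc n) \<subseteq> E n"
    and Erb: "\<And>n. E n \<subseteq> rb Y d ((1/2)^n)" using Eprop by blast+
  have Emono: "m \<le> n \<Longrightarrow> E n \<subseteq> E m" for m n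
    using lift_Suc_antimono_le[of E, OF Edec] by blast
  have rbsmall: "\<exists>\<epsilon>>0. rb Y d \<epsilon> \<subseteq> U" if "U \<in> \<Psi>" for U
    using that unfolding \<Psi>d metric_uniformity_def rb_def by blast
  have Ebase: "\<exists>n. E n \<subseteq> U" if U: "U \<in> \<Psi>" for U
  proof -
    obtain \<epsilon> where e: "\<epsilon> > 0" "rb Y d \<epsilon> \<subseteq> U" using rbsmall[OF U] by blast
    obtain n where n: "(1/2::real)^n < \<epsilon>" using real_arch_pow_inv[OF e(1), of "1/2"] by auto
    have "rb Y d ((1/2)^n) \<subseteq> rb Y d \<epsilon>" using n unfolding rb_def by auto
    then show ?thesis using Erb[of n] e(2) by blast
  qed
  have compl: "\<exists>z\<in>Y. \<forall>n. (p n, z) \<in> E n" if p: "\<forall>n. p n \<in> Y \<and> (p n, p (Suc n)) \<in> E n" for p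
  proof -
    have far: "(p n, p m) \<in> E n" if "n \<le> m" for n m
      using that
    proof (induction m rule: dec_induct)
      case base then show ?case using eqv_refl[OF Eeq] p by blast
    next
      case (step m)
      have "(p m, p (Suc m)) \<in> E n" using p Emono[OF step(1)] by blast
      then show ?case using step(3) eqv_trans[OF Eeq] by blast
    qed
    have "M.MCauchy p"
      unfolding M.MCauchy_def
    proof (intro conjI allI impI)
      show "range p \<subseteq> Y" using p by blast
      fix \<epsilon> :: real assume "\<epsilon> > 0"
      obtain N where N: "(1/2::real)^N < \<epsilon>" using real_arch_pow_inv[OF \<open>\<epsilon> > 0\<close>, of "1/2"] by auto
      have "d (p n) (p n') < \<epsilon>" if "N \<le> n" "N \<le> n'" for n n'
      proof -
        have "(p n, p n') \<in> E N" using far[OF that(1)] far[OF that(2)] eqv_sym[OF Eeq] eqv_trans[OF Eeq] by blast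
        then have "d (p n) (p n') < (1/2)^N" using Erb[of N] unfolding rb_def by blast
        then show ?thesis using N by simp
      qed
      then show "\<exists>N. \<forall>n n'. N \<le> n \<longrightarrow> N \<le> n' \<longrightarrow> d (p n) (p n') < \<epsilon>" by blast
    qed
    then obtain z where "limitin M.mtopology p z sequentially" using mc unfolding M.mcomplete_def by blast
    then have z: "z \<in> Y" "\<And>\<epsilon>. \<epsilon> > 0 \<Longrightarrow> eventually (\<lambda>j. p j \<in> Y \<and> d (p j) z < \<epsilon>) sequentially"
      unfolding M.limitin_metric by blast+
    have "(p n, z) \<in> E n" for n
    proof -
      obtain \<delta> where dl: "\<delta> > 0" "rb Y d \<delta> \<subseteq> E n" using rbsmall[OF E\<Psi>] by blast
      obtain N where N: "\<And>j. N \<le> j \<Longrightarrow> p j \<in> Y \<and> d (p j) z < \<delta>"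
        using z(2)[OF dl(1)] unfolding eventually_sequentially by blast
      have "(p (max n N), z) \<in> rb Y d \<delta>" using N[of "max n N"] z(1) unfolding rb_def by auto
      then have "(p (max n N), z) \<in> E n" using dl(2) by blast
      then show ?thesis using far[of n "max n N"] eqv_trans[OF Eeq] by auto
    qed
    then show ?thesis using z(1) by blast
  qed
  obtain \<B> where base: "open_base_of (utopology Y \<Psi>) \<B>" and bK: "\<B> \<lesssim> K"
    using wt unfolding weight_le_def by blast
  define h where "h B = (SOME y. y \<in> B)" for B :: "'b set"
  define D where "D = h ` (\<B> - {{}})"
  have "D \<lesssim> \<B> - {{}}" unfolding D_def by (rule image_lepoll)
  also have "\<B> - {{}} \<lesssim> \<B>" by (rule subset_imp_lepoll) blast
  also note bK
  finally obtain g where g: "D \<subseteq> g ` K" unfolding lepoll_iff by blast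
  obtain y0 where y0: "y0 \<in> Y" using assms(3) by blast
  define a where "a k = (if g k \<in> Y then g k else y0)" for k
  have aY: "a ` K \<subseteq> Y" unfolding a_def using y0 by auto
  note opY = openin_u[OF uY]
  have adense: "\<exists>k\<in>K. (y, a k) \<in> E n" if y: "y \<in> Y" for y n
  proof -
    define S where "S = {z. (y, z) \<in> E n}"
    have SY: "S \<subseteq> Y"
    proof
      fix z assume "z \<in> S"
      then have "(y, z) \<in> E n" unfolding S_def by simp
      then show "z \<in> Y" using eqv_sub[OF Eeq] by simp
    qed
    have sub: "{w. (z, w) \<in> E n} \<subseteq> S" if z: "z \<in> S" for z
    proof
      fix w assume "w \<in> {w. (z, w) \<in> E n}"
      then have "(z, w) \<in> E n" by simp
      moreover have "(y, z) \<in> E n" using z unfolding S_def by simp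
      ultimately show "w \<in> S" unfolding S_def using eqv_trans[OF Eeq] by simp
    qed
    have "\<forall>z\<in>S. \<exists>U\<in>\<Psi>. {w. (z, w) \<in> U} \<subseteq> S"
    proof
      fix z assume "z \<in> S"
      show "\<exists>U\<in>\<Psi>. {w. (z, w) \<in> U} \<subseteq> S" using sub[OF \<open>z \<in> S\<close>] E\<Psi>[of n] by blast
    qed
    then have Sop: "openin (utopology Y \<Psi>) S" unfolding opY using SY by simp
    have bb: "\<forall>S. openin (utopology Y \<Psi>) S \<longrightarrow> (\<exists>\<C>\<subseteq>\<B>. \<Union>\<C> = S)"
      using base unfolding open_base_of_def by (elim conjE)
    obtain \<C> where C: "\<C> \<subseteq> \<B>" "\<Union>\<C> = S" using bb[rule_format, OF Sop] by (elim exE conjE)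
    have "y \<in> S" unfolding S_def using eqv_refl[OF Eeq y] by simp
    then have "y \<in> \<Union>\<C>" using C(2) by simp
    then obtain B where B1: "B \<in> \<C>" "y \<in> B" by (elim UnionE)
    have B: "B \<in> \<B>" "y \<in> B" "B \<subseteq> S" using B1 C(1) apply blast
      using B1 apply blast using B1 C(2) by blast
    have hB: "h B \<in> B" unfolding h_def using B(2) by (rule someI)
    have "B \<in> \<B> - {{}}" using B by auto
    then have "h B \<in> D" unfolding D_def by (rule imageI)
    then have "h B \<in> g ` K" by (rule subsetD[OF g])
    then obtain k where k: "k \<in> K" "h B = g k" by (elim imageE)
    have hS: "h B \<in> S" using hB B(3) by blast
    then have "g k \<in> Y" using k SY by auto
    then have "a k = h B" using k unfolding a_def by simp
    then have "(y, a k) \<in> E n" using hS unfolding S_def by simp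
    then show ?thesis using k(1) by blast
  qed
  show "\<exists>f. uniformly_continuous_on_u (B_carrier K) (B_uniformity K) Y \<Psi> f
           \<and> f ` B_carrier K = Y
           \<and> quotient_map (utopology (B_carrier K) (B_uniformity K)) (utopology Y \<Psi>) f"
    by (rule main_constr[OF uY sepY Eeq E\<Psi> Edec Ebase aY adense compl])
qed

end
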